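(* Let $G=G_1*\cdots*G_r$ ($r\ge2$) be a free product of connected, locally finite, simple, quasi-transitive rooted graphs with $|V_i|\ge2$, and let $z_\ast$ be the smallest positive real number with $\sum_{i=1}^r\frac{\mathcal M_i(z_\ast)}{1+\mathcal M_i(z_\ast)}=1$ (so $z_\ast<\min_i R(\mathcal M_i)$). Let $$N(z)=\prod_{i=1}^r(1+\mathcal M_i(z)),\qquad D(z)=\prod_{k=1}^r\bigl(1+\mathcal M_k(z)\bigr)-\sum_{i=1}^r\mathcal M_i(z)\prod_{j\ne i}\bigl(1+\mathcal M_j(z)\bigr).$$ Then $z_\ast$ is a simple zero of $D$, and there exists a function $g$ analytic in a neighbourhood of $z_\ast$ with $g(z_\ast)\ne0$ such that $$\frac{N(z)}{D(z)}=\frac{g(z)}{z-z_\ast}$$ in a punctured neighbourhood of $z_\ast$.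
   Context: Free product of graphs: let $G_1=(V_1,E_1,o_1),\dots,G_r=(V_r,E_r,o_r)$ be rooted graphs with pairwise distinct vertex sets, $\mathcal I=\{1,\dots,r\}$, and $V_i^\times=V_i\setminus\{o_i\}$; set $\tau(x)=i$ for $x\in V_i^\times$. The vertex set $V$ consists of the empty word $o$ together with all finite words $x_1x_2\cdots x_n$ with letters $x_j\in\bigcup_i V_i^\times$ such that $\tau(x_j)\neq\tau(x_{j+1})$; set $\tau(x_1\cdots x_n)=\tau(x_n)$. Each $V_i$ is regarded as a subset of $V$ with $o_i$ identified with $o$, and concatenation $wx$ is defined when the last letter of $w$ and first letter of $x$ have different types (with $wo_i=w$ if $\tau(w)\ne i$). Edges: for $i\in\mathcal I$ and $x,y\in V_i$ with $x\sim y$ in $G_i$, put an edge $wx\sim wy$ for every $w\in V$ with $\tau(w)\neq i$. The free product is $G=(V,E,o)$. A graph is quasi-transitive if its automorphism group has finitely many orbits on vertices. A self-avoiding walk (SAW) of length $n$ from a vertex is a path $[v_0,\dots,v_n]$ of adjacent vertices starting at that vertex with no vertex repeated. $\sigma_n^{(i)}$ is the number of $n$-step SAWs in $G_i$ starting at $o_i$, $\mathcal M_i(z)=\sum_{n\ge1}\sigma^{(i)}_n z^n$, with radius of convergence $R(\mathcal M_i)$. *)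

theory Defs
  imports "HOL-Analysis.Analysis"
begin

definition simple_graph :: "'a set \<Rightarrow> ('a \<Rightarrow> 'a \<Rightarrow> bool) \<Rightarrow> bool" where
  "simple_graph V E \<longleftrightarrow> (\<forall>x y. E x y \<longrightarrow> x \<in> V \<and> y \<in> V) \<and>
     (\<forall>x y. E x y \<longrightarrow> E y x) \<and> (\<forall>x. \<not> E x x)"

definition is_walk :: "'a set \<Rightarrow> ('a \<Rightarrow> 'a \<Rightarrow> bool) \<Rightarrow> 'a list \<Rightarrow> bool" where
  "is_walk V E p \<longleftrightarrow> p \<noteq> [] \<and> set p \<subseteq> V \<and> (\<forall>k. Suc k < length p \<longrightarrow> E (p ! k) (p ! Suc k))"

definition connected_graph :: "'a set \<Rightarrow> ('a \<Rightarrow> 'a \<Rightarrow> bool) \<Rightarrow> bool" where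
  "connected_graph V E \<longleftrightarrow>
     (\<forall>x\<in>V. \<forall>y\<in>V. \<exists>p. is_walk V E p \<and> hd p = x \<and> last p = y)"

definition locally_finite :: "'a set \<Rightarrow> ('a \<Rightarrow> 'a \<Rightarrow> bool) \<Rightarrow> bool" where
  "locally_finite V E \<longleftrightarrow> (\<forall>x\<in>V. finite {y. E x y})"

definition graph_aut :: "'a set \<Rightarrow> ('a \<Rightarrow> 'a \<Rightarrow> bool) \<Rightarrow> ('a \<Rightarrow> 'a) \<Rightarrow> bool" where
  "graph_aut V E f \<longleftrightarrow> bij_betw f V V \<and> (\<forall>x\<in>V. \<forall>y\<in>V. E (f x) (f y) \<longleftrightarrow> E x y)"

definition quasi_transitive :: "'a set \<Rightarrow> ('a \<Rightarrow> 'a \<Rightarrow> bool) \<Rightarrow> bool" where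
  "quasi_transitive V E \<longleftrightarrow>
     finite ((\<lambda>x. {y. \<exists>f. graph_aut V E f \<and> f x = y}) ` V)"

text \<open>Self-avoiding walks of length n (n steps, n+1 vertices) starting at the root rt.\<close>
definition saws :: "'a set \<Rightarrow> ('a \<Rightarrow> 'a \<Rightarrow> bool) \<Rightarrow> 'a \<Rightarrow> nat \<Rightarrow> 'a list set" where
  "saws V E rt n = {p. is_walk V E p \<and> distinct p \<and> length p = Suc n \<and> hd p = rt}"

definition saw_count :: "'a set \<Rightarrow> ('a \<Rightarrow> 'a \<Rightarrow> bool) \<Rightarrow> 'a \<Rightarrow> nat \<Rightarrow> nat" where
  "saw_count V E rt n = card (saws V E rt n)"

definition saw_gf :: "'a set \<Rightarrow> ('a \<Rightarrow> 'a \<Rightarrow> bool) \<Rightarrow> 'a \<Rightarrow> complex \<Rightarrow> complex" where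
  "saw_gf V E rt z = (\<Sum>n. (if n = 0 then 0 else of_nat (saw_count V E rt n)) * z ^ n)"

definition saw_gf_summable :: "'a set \<Rightarrow> ('a \<Rightarrow> 'a \<Rightarrow> bool) \<Rightarrow> 'a \<Rightarrow> complex \<Rightarrow> bool" where
  "saw_gf_summable V E rt z = summable (\<lambda>n. (if n = 0 then 0 else of_nat (saw_count V E rt n)) * z ^ n)"

end

theory Submission
  imports Defs "HOL-Complex_Analysis.Complex_Analysis"
begin

lemma walk_take: "is_walk V E p \<Longrightarrow> 0 < k \<Longrightarrow> is_walk V E (take k p)"
  unfolding is_walk_def using set_take_subset[of k p] by auto

lemma walk_drop: "is_walk V E p \<Longrightarrow> k < length p \<Longrightarrow> is_walk V E (drop k p)"
  unfolding is_walk_def using set_drop_subset[of k p] by auto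

lemma walk_Cons: "is_walk V E p \<Longrightarrow> E u (hd p) \<Longrightarrow> u \<in> V \<Longrightarrow> is_walk V E (u # p)"
  unfolding is_walk_def
  apply auto
  subgoal for k by (cases k) (auto simp: hd_conv_nth)
  done

lemma saws_finite:
  assumes sg: "simple_graph V E" and lf: "locally_finite V E"
  shows "finite (saws V E v n)"
proof (induction n)
  case 0
  have "saws V E v 0 \<subseteq> {[v]}"
    unfolding saws_def by (auto simp: length_Suc_conv)
  then show ?case using finite_subset by blast
next
  case (Suc n)
  have "saws V E v (Suc n) \<subseteq> (\<lambda>(p,y). p @ [y]) ` (SIGMA p:saws V E v n. {y. E (last p) y})"
  proof
    fix q assume q: "q \<in> saws V E v (Suc n)"
    then have w: "is_walk V E q" and d: "distinct q" and l: "length q = Suc (Suc n)" and h: "hd q = v"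
      unfolding saws_def by auto
    have bq: "butlast q = take (Suc n) q" using l by (simp add: butlast_conv_take)
    have "take (Suc n) q \<in> saws V E v n"
      unfolding saws_def using walk_take[OF w, of "Suc n"] d l h
      by (auto simp: hd_take)
    moreover have "E (last (take (Suc n) q)) (last q)"
    proof -
      have "last (take (Suc n) q) = q ! n" using l by (subst last_conv_nth) auto
      moreover have "last q = q ! Suc n" using l by (subst last_conv_nth) auto
      ultimately show ?thesis using w l unfolding is_walk_def by auto
    qed
    moreover have "q = take (Suc n) q @ [last q]"
      using l bq by (metis append_butlast_last_id list.size(3) nat.simps(3))
    ultimately show "q \<in> (\<lambda>(p,y). p @ [y]) ` (SIGMA p:saws V E v n. {y. E (last p) y})"
      by (auto intro!: image_eqI[where x="(take (Suc n) q, last q)"])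
  qed
  moreover have "finite (SIGMA p:saws V E v n. {y. E (last p) y})"
  proof (rule finite_SigmaI[OF Suc])
    fix p assume "p \<in> saws V E v n"
    then have "last p \<in> V" unfolding saws_def is_walk_def by auto
    then show "finite {y. E (last p) y}" using lf unfolding locally_finite_def by auto
  qed
  ultimately show ?case by (meson finite_imageI finite_subset)
qed

lemma aut_count_le:
  assumes sg: "simple_graph V E" and lf: "locally_finite V E"
    and f: "graph_aut V E f" and v: "v \<in> V"
  shows "saw_count V E v n \<le> saw_count V E (f v) n"
proof -
  have bij: "bij_betw f V V" and ed: "\<forall>x\<in>V. \<forall>y\<in>V. E (f x) (f y) \<longleftrightarrow> E x y"
    using f unfolding graph_aut_def by auto
  have inj: "inj_on f V" and im: "f ` V = V" using bij unfolding bij_betw_def by auto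
  have "map f ` saws V E v n \<subseteq> saws V E (f v) n"
  proof
    fix q assume "q \<in> map f ` saws V E v n"
    then obtain p where q: "q = map f p" and p: "p \<in> saws V E v n" by auto
    then have w: "is_walk V E p" and d: "distinct p" and l: "length p = Suc n" and h: "hd p = v"
      unfolding saws_def by auto
    have sp: "set p \<subseteq> V" using w unfolding is_walk_def by auto
    have "is_walk V E q"
      unfolding is_walk_def q
    proof (intro conjI allI impI)
      show "map f p \<noteq> []" using l by auto
      show "set (map f p) \<subseteq> V" using sp im by auto
      fix k assume k: "Suc k < length (map f p)"
      then have "E (p ! k) (p ! Suc k)" using w unfolding is_walk_def by auto
      moreover have "p ! k \<in> V" "p ! Suc k \<in> V" using sp k by auto
      ultimately show "E (map f p ! k) (map f p ! Suc k)" using ed k by auto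
    qed
    moreover have "distinct q" unfolding q using d inj sp by (simp add: distinct_map inj_on_subset)
    moreover have "hd q = f v" using q h l by (cases p) auto
    ultimately show "q \<in> saws V E (f v) n" using l q unfolding saws_def by auto
  qed
  moreover have "inj_on (map f) (saws V E v n)"
  proof (rule inj_onI)
    fix p q assume "p \<in> saws V E v n" "q \<in> saws V E v n" "map f p = map f q"
    moreover have "set p \<subseteq> V" "set q \<subseteq> V" using calculation unfolding saws_def is_walk_def by auto
    ultimately show "p = q" using inj_on_map_eq_map[of f p q] inj_on_subset[OF inj] by auto
  qed
  ultimately show ?thesis unfolding saw_count_def
    using card_inj_on_le saws_finite[OF sg lf] by metis
qed

lemma aut_inv:
  assumes f: "graph_aut V E f"
  shows "graph_aut V E (inv_into V f)"
proof -
  have bij: "bij_betw f V V" and ed: "\<forall>x\<in>V. \<forall>y\<in>V. E (f x) (f y) \<longleftrightarrow> E x y"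
    using f unfolding graph_aut_def by auto
  have bi: "bij_betw (inv_into V f) V V" using bij_betw_inv_into[OF bij] .
  have "E (inv_into V f x) (inv_into V f y) \<longleftrightarrow> E x y" if "x \<in> V" "y \<in> V" for x y
  proof -
    have "inv_into V f x \<in> V" "inv_into V f y \<in> V" using bi that bij_betwE by blast+
    moreover have "f (inv_into V f x) = x" "f (inv_into V f y) = y"
      using that bij by (auto simp: bij_betw_def f_inv_into_f)
    ultimately show ?thesis using ed by metis
  qed
  then show ?thesis unfolding graph_aut_def using bi by auto
qed

lemma aut_count_eq:
  assumes sg: "simple_graph V E" and lf: "locally_finite V E"
    and f: "graph_aut V E f" and v: "v \<in> V"
  shows "saw_count V E (f v) n = saw_count V E v n"
proof -
  have bij: "bij_betw f V V" using f unfolding graph_aut_def by auto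
  have fv: "f v \<in> V" using bij v bij_betwE by blast
  have "inv_into V f (f v) = v" using bij v by (simp add: bij_betw_def)
  then have "saw_count V E (f v) n \<le> saw_count V E v n"
    using aut_count_le[OF sg lf aut_inv[OF f] fv, of n] by simp
  then show ?thesis using aut_count_le[OF sg lf f v, of n] by simp
qed

lemma orbit_reps:
  assumes sg: "simple_graph V E" and lf: "locally_finite V E" and qt: "quasi_transitive V E"
  shows "\<exists>R. finite R \<and> R \<subseteq> V \<and> (\<forall>v\<in>V. \<exists>w\<in>R. \<forall>n. saw_count V E v n = saw_count V E w n)"
proof -
  define orb where "orb x = {y. \<exists>f. graph_aut V E f \<and> f x = y}" for x
  have fin: "finite (orb ` V)" using qt unfolding quasi_transitive_def orb_def by simp
  define rep where "rep Ob = (SOME w. w \<in> V \<and> orb w = Ob)" for Ob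
  have idaut: "graph_aut V E id" unfolding graph_aut_def by auto
  have rp: "rep (orb v) \<in> V \<and> orb (rep (orb v)) = orb v" if "v \<in> V" for v
    unfolding rep_def by (rule someI[of _ v]) (use that in auto)
  show ?thesis
  proof (intro exI conjI ballI)
    show "finite (rep ` orb ` V)" using fin by simp
    show "rep ` orb ` V \<subseteq> V" using rp by auto
    fix v assume v: "v \<in> V"
    let ?w = "rep (orb v)"
    have "v \<in> orb v" unfolding orb_def using idaut by auto
    then have "v \<in> orb ?w" using rp[OF v] by simp
    then obtain f where f: "graph_aut V E f" "f ?w = v" unfolding orb_def by auto
    show "\<exists>w\<in>rep ` orb ` V. \<forall>n. saw_count V E v n = saw_count V E w n"
      using aut_count_eq[OF sg lf f(1), of ?w] rp[OF v] f(2) v by (intro bexI[of _ ?w]) auto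
  qed
qed

lemma submult:
  assumes sg: "simple_graph V E" and lf: "locally_finite V E"
    and K: "\<forall>u\<in>V. saw_count V E u m \<le> K"
  shows "saw_count V E v (n + m) \<le> saw_count V E v n * K"
proof -
  let ?A = "SIGMA p:saws V E v n. saws V E (last p) m"
  let ?phi = "\<lambda>q. (take (Suc n) q, drop n q)"
  have sub: "?phi ` saws V E v (n + m) \<subseteq> ?A"
  proof
    fix x assume "x \<in> ?phi ` saws V E v (n + m)"
    then obtain q where x: "x = ?phi q" and q: "q \<in> saws V E v (n + m)" by auto
    then have w: "is_walk V E q" and d: "distinct q" and l: "length q = Suc (n + m)" and h: "hd q = v"
      unfolding saws_def by auto
    have "take (Suc n) q \<in> saws V E v n"
      unfolding saws_def using walk_take[OF w, of "Suc n"] d l h by auto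
    moreover have "last (take (Suc n) q) = q ! n" using l by (subst last_conv_nth) auto
    moreover have "drop n q \<in> saws V E (q ! n) m"
      unfolding saws_def using walk_drop[OF w, of n] d l by (auto simp: hd_drop_conv_nth)
    ultimately show "x \<in> ?A" using x by auto
  qed
  have inj: "inj_on ?phi (saws V E v (n + m))"
  proof (rule inj_onI)
    fix p q assume "p \<in> saws V E v (n + m)" "q \<in> saws V E v (n + m)" "?phi p = ?phi q"
    then have "take (Suc n) p = take (Suc n) q" "drop (Suc n) p = drop (Suc n) q"
      by (auto simp: drop_Suc tl_drop[symmetric])
    then show "p = q" by (metis append_take_drop_id)
  qed
  have fA: "finite ?A" using saws_finite[OF sg lf] by auto
  have "saw_count V E v (n + m) \<le> card ?A"
    unfolding saw_count_def using card_inj_on_le[OF inj sub fA] .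
  also have "card ?A = (\<Sum>p\<in>saws V E v n. saw_count V E (last p) m)"
    unfolding saw_count_def using saws_finite[OF sg lf] by (simp add: card_SigmaI)
  also have "\<dots> \<le> (\<Sum>p\<in>saws V E v n. K)"
  proof (rule sum_mono)
    fix p assume "p \<in> saws V E v n"
    then have "last p \<in> V" unfolding saws_def is_walk_def by auto
    then show "saw_count V E (last p) m \<le> K" using K by auto
  qed
  also have "\<dots> = saw_count V E v n * K" unfolding saw_count_def by simp
  finally show ?thesis .
qed

lemma transfer:
  assumes sg: "simple_graph V E" and lf: "locally_finite V E" and e: "E u v"
  shows "saw_count V E v n \<le> saw_count V E u (Suc n) + (\<Sum>k\<le>n. saw_count V E u k * saw_count V E u (n - k))"
proof -
  have uV: "u \<in> V" and uv: "u \<noteq> v" using sg e unfolding simple_graph_def by blast+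
  let ?B = "\<Union>k\<le>n. saws V E u k \<times> saws V E u (n - k)"
  let ?T = "Inl ` saws V E u (Suc n) \<union> Inr ` ?B"
  let ?psi = "\<lambda>w. if u \<notin> set w then Inl (u # w)
      else Inr (u # takeWhile (\<lambda>x. x \<noteq> u) w, dropWhile (\<lambda>x. x \<noteq> u) w)"
  have sub: "?psi ` saws V E v n \<subseteq> ?T"
  proof
    fix x assume "x \<in> ?psi ` saws V E v n"
    then obtain w where x: "x = ?psi w" and q: "w \<in> saws V E v n" by (rule imageE)
    then have wk: "is_walk V E w" and d: "distinct w" and l: "length w = Suc n" and h: "hd w = v"
      unfolding saws_def by auto
    show "x \<in> ?T"
    proof (cases "u \<in> set w")
      case False
      have "u # w \<in> saws V E u (Suc n)"
        unfolding saws_def using walk_Cons[OF wk _ uV] e h d False l by auto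
      then show ?thesis using x False by auto
    next
      case True
      define t where "t = takeWhile (\<lambda>x. x \<noteq> u) w"
      define dd where "dd = dropWhile (\<lambda>x. x \<noteq> u) w"
      have td: "t = take (length t) w" "dd = drop (length t) w"
        unfolding t_def dd_def by (rule takeWhile_eq_take, rule dropWhile_eq_drop)
      have ddne: "dd \<noteq> []" unfolding dd_def using True by (auto simp: dropWhile_eq_Nil_conv)
      have hdd: "hd dd = u" using hd_dropWhile[of "\<lambda>x. x \<noteq> u" w] ddne unfolding dd_def by simp
      have wne: "w \<noteq> []" using l by auto
      have tne: "t \<noteq> []" unfolding t_def using wne h uv by (cases w) auto
      have ht: "hd t = v" using tne h unfolding t_def by (cases w) auto
      have wtd: "t @ dd = w" unfolding t_def dd_def by (rule takeWhile_dropWhile_id)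
      have "length (t @ dd) = Suc n" using wtd l by simp
      then have lt: "length t + length dd = Suc n" by simp
      define k where "k = length t"
      have kn: "k \<le> n" using lt ddne unfolding k_def by (cases dd) auto
      have a1: "u # t \<in> saws V E u k"
      proof -
        have "is_walk V E (take (length t) w)" using walk_take[OF wk, of "length t"] tne by auto
        then have "is_walk V E t" by (simp only: td(1)[symmetric])
        then have "is_walk V E (u # t)" using walk_Cons[OF _ _ uV] e ht by auto
        moreover have "distinct t" by (subst td(1)) (rule distinct_take[OF d])
        moreover have "u \<notin> set t" unfolding t_def using set_takeWhileD by fastforce
        ultimately have "is_walk V E (u # t) \<and> distinct (u # t)" by simp
        then show ?thesis unfolding saws_def k_def by auto
      qed
      have a2: "dd \<in> saws V E u (n - k)"
      proof -
        have "is_walk V E (drop (length t) w)" using walk_drop[OF wk, of "length t"] lt ddne l by (cases dd) auto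
        then have "is_walk V E dd" by (simp only: td(2)[symmetric])
        moreover have "distinct dd" by (subst td(2)) (rule distinct_drop[OF d])
        ultimately show ?thesis unfolding saws_def using hdd lt kn unfolding k_def by auto
      qed
      have "x = Inr (u # t, dd)" using x True unfolding t_def dd_def by auto
      then show ?thesis using a1 a2 kn by auto
    qed
  qed
  have inj: "inj_on ?psi (saws V E v n)"
  proof (rule inj_onI)
    fix p q assume "p \<in> saws V E v n" "q \<in> saws V E v n" and eq: "?psi p = ?psi q"
    show "p = q"
    proof (cases "u \<in> set p")
      case True
      then have "u \<in> set q" using eq by (cases "u \<in> set q") auto
      then have "takeWhile (\<lambda>x. x \<noteq> u) p = takeWhile (\<lambda>x. x \<noteq> u) q"
         "dropWhile (\<lambda>x. x \<noteq> u) p = dropWhile (\<lambda>x. x \<noteq> u) q" using eq True by auto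
      then show ?thesis by (metis takeWhile_dropWhile_id)
    next
      case False
      then have "u \<notin> set q" using eq by (cases "u \<in> set q") auto
      then show ?thesis using eq False by auto
    qed
  qed
  have fB: "finite ?B" using saws_finite[OF sg lf] by auto
  have fT: "finite ?T" using saws_finite[OF sg lf] fB by auto
  have "saw_count V E v n \<le> card ?T"
    unfolding saw_count_def using card_inj_on_le[OF inj sub fT] .
  also have "\<dots> \<le> card (Inl ` saws V E u (Suc n) :: ('a list + 'a list \<times> 'a list) set) + card (Inr ` ?B :: ('a list + 'a list \<times> 'a list) set)"
    by (rule card_Un_le)
  also have "\<dots> = saw_count V E u (Suc n) + card ?B"
  proof -
    have ci1: "card (Inl ` saws V E u (Suc n) :: ('a list + 'a list \<times> 'a list) set) = card (saws V E u (Suc n))"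
      by (rule card_image) (simp add: inj_on_def)
    have ci2: "card (Inr ` ?B :: ('a list + 'a list \<times> 'a list) set) = card ?B"
      by (rule card_image) (simp add: inj_on_def)
    show ?thesis by (simp only: ci1 ci2 saw_count_def)
  qed
  finally have c1: "saw_count V E v n \<le> saw_count V E u (Suc n) + card ?B" .
  have "card ?B \<le> (\<Sum>k\<le>n. card (saws V E u k \<times> saws V E u (n - k)))"
    by (rule card_UN_le) simp
  also have "\<dots> = (\<Sum>k\<le>n. saw_count V E u k * saw_count V E u (n - k))"
    by (simp only: saw_count_def card_cartesian_product)
  finally show ?thesis using c1 by linarith
qed

lemma sum_transfer:
  assumes sg: "simple_graph V E" and lf: "locally_finite V E" and e: "E u v" and x: "x > 0"
    and su: "summable (\<lambda>n. real (saw_count V E u n) * x ^ n)"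
  shows "summable (\<lambda>n. real (saw_count V E v n) * x ^ n)"
proof -
  define f where "f n = real (saw_count V E u n) * x ^ n" for n
  have f0: "f n \<ge> 0" for n unfolding f_def using x by simp
  have "summable f" using su unfolding f_def .
  then have "summable (\<lambda>n. f (Suc n))" using summable_Suc_iff[of f] by blast
  then have s1: "summable (\<lambda>n. f (Suc n) / x)" by (rule summable_divide)
  have s2: "summable (\<lambda>n. \<Sum>k\<le>n. f k * f (n - k))"
    by (rule summable_Cauchy_product) (use su f0 in \<open>auto simp: f_def\<close>)
  show ?thesis
  proof (rule summable_comparison_test[OF _ summable_add[OF s1 s2]])
    show "\<exists>N. \<forall>n\<ge>N. norm (real (saw_count V E v n) * x ^ n) \<le> f (Suc n) / x + (\<Sum>k\<le>n. f k * f (n - k))"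
    proof (intro exI allI impI)
      fix n :: nat
      have "real (saw_count V E v n) * x ^ n \<le>
          real (saw_count V E u (Suc n) + (\<Sum>k\<le>n. saw_count V E u k * saw_count V E u (n - k))) * x ^ n"
      proof (rule mult_right_mono)
        show "real (saw_count V E v n) \<le> real (saw_count V E u (Suc n) + (\<Sum>k\<le>n. saw_count V E u k * saw_count V E u (n - k)))"
          using transfer[OF sg lf e, of n] by (simp only: of_nat_le_iff)
      qed (use x in simp)
      also have "\<dots> = f (Suc n) / x + (\<Sum>k\<le>n. f k * f (n - k))"
      proof -
        have pk: "real (saw_count V E u k * saw_count V E u (n - k)) * x ^ n = f k * f (n - k)" if "k \<le> n" for k
        proof -
          have "x ^ n = x ^ k * x ^ (n - k)" using that by (simp add: power_add[symmetric])
          then show ?thesis unfolding f_def by simp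
        qed
        have eq: "(\<Sum>k\<le>n. real (saw_count V E u k * saw_count V E u (n - k)) * x ^ n) = (\<Sum>k\<le>n. f k * f (n - k))"
          by (rule sum.cong[OF refl]) (rule pk, simp)
        have e1: "real (saw_count V E u (Suc n)) * x ^ n = f (Suc n) / x" unfolding f_def using x by simp
        have "real (saw_count V E u (Suc n) + (\<Sum>k\<le>n. saw_count V E u k * saw_count V E u (n - k))) * x ^ n
           = real (saw_count V E u (Suc n)) * x ^ n + (\<Sum>k\<le>n. real (saw_count V E u k * saw_count V E u (n - k)) * x ^ n)"
          by (simp only: of_nat_add of_nat_sum distrib_right sum_distrib_right)
        then show ?thesis by (simp only: e1 eq)
      qed
      finally show "norm (real (saw_count V E v n) * x ^ n) \<le> f (Suc n) / x + (\<Sum>k\<le>n. f k * f (n - k))"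
        using x by simp
    qed
  qed
qed

lemma all_summable:
  assumes sg: "simple_graph V E" and lf: "locally_finite V E" and cn: "connected_graph V E"
    and v0: "v0 \<in> V" and x: "x > 0"
    and so: "summable (\<lambda>n. real (saw_count V E v0 n) * x ^ n)"
    and v: "v \<in> V"
  shows "summable (\<lambda>n. real (saw_count V E v n) * x ^ n)"
proof -
  obtain p where p: "is_walk V E p" "hd p = v0" "last p = v"
    using cn v0 v unfolding connected_graph_def by blast
  have "k < length p \<Longrightarrow> summable (\<lambda>n. real (saw_count V E (p ! k) n) * x ^ n)" for k
  proof (induction k)
    case 0
    then show ?case using p so by (simp add: hd_conv_nth)
  next
    case (Suc k)
    then have "E (p ! k) (p ! Suc k)" using p unfolding is_walk_def by auto
    then show ?case using sum_transfer[OF sg lf _ x] Suc by auto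
  qed
  moreover have "p \<noteq> []" using p unfolding is_walk_def by auto
  moreover have "length p - 1 < length p" "p ! (length p - 1) = v"
    using p \<open>p \<noteq> []\<close> by (auto simp: last_conv_nth)
  ultimately show ?thesis by metis
qed

lemma submult_pow:
  fixes s :: "nat \<Rightarrow> nat"
  assumes sm: "\<And>a b. s (a + b) \<le> s a * s b"
  shows "s (k * N + j) \<le> s N ^ k * s j"
proof (induction k)
  case 0 then show ?case by simp
next
  case (Suc k)
  have "s (Suc k * N + j) = s (N + (k * N + j))" by (simp add: algebra_simps)
  also have "\<dots> \<le> s N * s (k * N + j)" by (rule sm)
  also have "\<dots> \<le> s N * (s N ^ k * s j)" using Suc by simp
  finally show ?case by (simp add: algebra_simps)
qed

lemma radius_gain:
  assumes sg: "simple_graph V E" and lf: "locally_finite V E" and cn: "connected_graph V E"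
    and qt: "quasi_transitive V E"
    and v0: "v0 \<in> V" and x: "x > 0"
    and so: "summable (\<lambda>n. real (saw_count V E v0 n) * x ^ n)"
  shows "\<exists>y>x. summable (\<lambda>n. real (saw_count V E v0 n) * y ^ n)"
proof -
  obtain R where R: "finite R" "R \<subseteq> V" "\<forall>v\<in>V. \<exists>w\<in>R. \<forall>n. saw_count V E v n = saw_count V E w n"
    using orbit_reps[OF sg lf qt] by blast
  define s where "s n = (\<Sum>w\<in>R. saw_count V E w n)" for n
  have cle: "saw_count V E v n \<le> s n" if vV: "v \<in> V" for v n
  proof -
    obtain w where "w \<in> R" "\<forall>n. saw_count V E v n = saw_count V E w n" using R(3) vV by meson
    moreover have "saw_count V E w n \<le> s n" unfolding s_def
      by (rule member_le_sum) (use \<open>w \<in> R\<close> R(1) in auto)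
    ultimately show ?thesis by metis
  qed
  have sm: "s (a + b) \<le> s a * s b" for a b
  proof -
    have "s (a + b) \<le> (\<Sum>w\<in>R. saw_count V E w a * s b)"
      unfolding s_def[of "a+b"]
    proof (rule sum_mono)
      fix w assume "w \<in> R"
      show "saw_count V E w (a + b) \<le> saw_count V E w a * s b"
        by (rule submult[OF sg lf]) (use cle in blast)
    qed
    also have "\<dots> = s a * s b" by (simp only: s_def[of a] sum_distrib_right)
    finally show ?thesis .
  qed
  have ss: "summable (\<lambda>n. real (s n) * x ^ n)"
  proof -
    have "summable (\<lambda>n. \<Sum>w\<in>R. real (saw_count V E w n) * x ^ n)"
      by (rule summable_sum) (use all_summable[OF sg lf cn v0 x so] R(2) in auto)
    then show ?thesis unfolding s_def of_nat_sum sum_distrib_right .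
  qed
  have "(\<lambda>n. real (s n) * x ^ n) \<longlonglongrightarrow> 0" using summable_LIMSEQ_zero[OF ss] .
  then have "eventually (\<lambda>n. real (s n) * x ^ n < 1) sequentially"
    by (rule order_tendstoD) simp
  then obtain N0 where N0: "\<forall>n\<ge>N0. real (s n) * x ^ n < 1" by (auto simp: eventually_sequentially)
  define N where "N = Suc N0"
  have N: "N > 0" "real (s N) * x ^ N < 1" unfolding N_def using N0[rule_format, of "Suc N0"] by auto
  have "((\<lambda>y. real (s N) * y ^ N) \<longlongrightarrow> real (s N) * x ^ N) (at_right x)"
    by (intro tendsto_intros)
  then have "eventually (\<lambda>y. real (s N) * y ^ N < 1) (at_right x)"
    using N(2) by (rule order_tendstoD)
  then obtain b where b: "b > x" "\<And>y. x < y \<Longrightarrow> y < b \<Longrightarrow> real (s N) * y ^ N < 1"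
    by (auto simp: eventually_at_right_field)
  define y where "y = (x + b) / 2"
  have y: "x < y" "y < b" using b unfolding y_def by auto
  have ypos: "y > 0" using x y by simp
  define q where "q = max (real (s N) * y ^ N) (1/2)"
  have q: "q < 1" "q > 0" "real (s N) * y ^ N \<le> q" using b(2)[OF y] unfolding q_def by auto
  define \<rho> where "\<rho> = root N q"
  have rho: "\<rho> > 0" "\<rho> < 1" "\<rho> ^ N = q" using q N(1) unfolding \<rho>_def
    by (auto simp: real_root_pow_pos2)
  define B where "B = (\<Sum>j<N. real (s j) * y ^ j) / \<rho> ^ N"
  have bound: "real (s n) * y ^ n \<le> B * \<rho> ^ n" for n
  proof -
    define k where "k = n div N"
    define j where "j = n mod N"
    have n: "n = k * N + j" unfolding k_def j_def by simp
    have jN: "j < N" unfolding j_def using N(1) by simp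
    have "real (s n) \<le> real (s N) ^ k * real (s j)"
      using submult_pow[of s, OF sm, of k N j] n by (metis of_nat_le_iff of_nat_mult of_nat_power)
    then have "real (s n) * y ^ n \<le> real (s N) ^ k * real (s j) * y ^ n"
      using ypos by (simp add: mult_right_mono)
    also have "\<dots> = (real (s N) * y ^ N) ^ k * (real (s j) * y ^ j)"
      unfolding n by (simp add: power_add power_mult power_mult_distrib algebra_simps)
    also have "\<dots> \<le> q ^ k * (\<Sum>j<N. real (s j) * y ^ j)"
    proof (rule mult_mono)
      show "(real (s N) * y ^ N) ^ k \<le> q ^ k" using q(3) ypos by (intro power_mono) auto
      show "real (s j) * y ^ j \<le> (\<Sum>j<N. real (s j) * y ^ j)"
        using jN ypos by (intro member_le_sum) auto
    qed (use q ypos in auto)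
    finally have h1: "real (s n) * y ^ n \<le> q ^ k * (\<Sum>j<N. real (s j) * y ^ j)" .
    have "q ^ k = \<rho> ^ n / \<rho> ^ j"
    proof -
      have "q ^ k = \<rho> ^ (N * k)" using rho(3) by (simp add: power_mult)
      then show ?thesis unfolding n using rho by (simp add: power_add mult.commute)
    qed
    also have "\<dots> \<le> \<rho> ^ n / \<rho> ^ N"
      using rho jN by (intro divide_left_mono power_decreasing) auto
    finally have h2: "q ^ k \<le> \<rho> ^ n / \<rho> ^ N" .
    have Sj: "0 \<le> (\<Sum>j<N. real (s j) * y ^ j)" using ypos by (intro sum_nonneg) auto
    have "real (s n) * y ^ n \<le> \<rho> ^ n / \<rho> ^ N * (\<Sum>j<N. real (s j) * y ^ j)"
      using h1 mult_right_mono[OF h2 Sj] by linarith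
    also have "\<dots> = B * \<rho> ^ n" unfolding B_def by simp
    finally show ?thesis .
  qed
  have "summable (\<lambda>n. B * \<rho> ^ n)" using rho by (intro summable_mult summable_geometric) auto
  then have "summable (\<lambda>n. real (s n) * y ^ n)"
    by (rule summable_comparison_test[rotated]) (use bound ypos in auto)
  then have "summable (\<lambda>n. real (saw_count V E v0 n) * y ^ n)"
    by (rule summable_comparison_test[rotated]) (use cle[OF v0] ypos in \<open>auto intro!: mult_right_mono\<close>)
  then show ?thesis using y by auto
qed

lemma c1_pos:
  assumes sg: "simple_graph V E" and lf: "locally_finite V E" and cn: "connected_graph V E"
    and v0: "v0 \<in> V" and c1: "card V \<noteq> 1" and ne: "V \<noteq> {}"
  shows "saw_count V E v0 1 > 0"
proof -
  obtain y where y: "y \<in> V" "y \<noteq> v0"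
  proof (cases "V = {v0}")
    case True then show ?thesis using c1 by simp
  next
    case False then show ?thesis using that v0 by blast
  qed
  obtain p where p: "is_walk V E p" "hd p = v0" "last p = y"
    using cn v0 y unfolding connected_graph_def by blast
  have pne: "p \<noteq> []" using p unfolding is_walk_def by auto
  have "length p \<noteq> 1"
  proof
    assume "length p = 1"
    then obtain a where "p = [a]" by (cases p) (auto simp: length_Suc_conv)
    then show False using p y by auto
  qed
  then have lp: "Suc 0 < length p" using pne by (cases p) auto
  then have e: "E v0 (p ! 1)" using p pne unfolding is_walk_def by (auto simp: hd_conv_nth)
  have sg1: "\<And>x y. E x y \<Longrightarrow> x \<in> V \<and> y \<in> V" and sg3: "\<And>x. \<not> E x x"
    using sg unfolding simple_graph_def by auto
  have "p ! 1 \<in> V" using sg1[OF e] by simp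
  moreover have "v0 \<noteq> p ! 1" using e sg3 by metis
  moreover have "\<forall>k. Suc k < length [v0, p ! 1] \<longrightarrow> E ([v0, p ! 1] ! k) ([v0, p ! 1] ! Suc k)"
  proof (intro allI impI)
    fix k assume "Suc k < length [v0, p ! 1]"
    then have "k = 0" by simp
    then show "E ([v0, p ! 1] ! k) ([v0, p ! 1] ! Suc k)" using e by simp
  qed
  ultimately have "[v0, p ! 1] \<in> saws V E v0 1"
    unfolding saws_def is_walk_def using v0 by simp
  then show ?thesis unfolding saw_count_def using saws_finite[OF sg lf]
    by (auto simp: card_gt_0_iff)
qed

lemma coeff_conv:
  "summable (\<lambda>n. (if n = 0 then 0 else of_nat (f n) :: complex) * complex_of_real x ^ n)
   \<longleftrightarrow> summable (\<lambda>n. real (f n) * x ^ n)"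
proof -
  have "summable (\<lambda>n. (if n = 0 then 0 else of_nat (f n) :: complex) * complex_of_real x ^ n)
     \<longleftrightarrow> summable (\<lambda>n. complex_of_real ((if n = 0 then 0 else real (f n)) * x ^ n))"
    by (rule arg_cong[where f=summable]) (auto simp: fun_eq_iff)
  also have "\<dots> \<longleftrightarrow> summable (\<lambda>n. (if n = 0 then 0 else real (f n)) * x ^ n)"
    by (rule summable_of_real_iff)
  also have "\<dots> \<longleftrightarrow> summable (\<lambda>n. real (f n) * x ^ n)"
    by (subst (1 2) summable_Suc_iff[symmetric]) simp
  finally show ?thesis .
qed

theorem lemma2:
  fixes r :: nat
    and V :: "nat \<Rightarrow> 'a set" and E :: "nat \<Rightarrow> 'a \<Rightarrow> 'a \<Rightarrow> bool" and rt :: "nat \<Rightarrow> 'a"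
    and zs :: real
  defines "M \<equiv> (\<lambda>i z. saw_gf (V i) (E i) (rt i) z)"
  defines "N \<equiv> (\<lambda>z. \<Prod>i=1..r. 1 + M i z)"
  defines "D \<equiv> (\<lambda>z. (\<Prod>k=1..r. 1 + M k z)
                    - (\<Sum>i=1..r. M i z * (\<Prod>j\<in>{1..r}-{i}. 1 + M j z)))"
  assumes r2: "r \<ge> 2"
    and graphs: "\<And>i. i \<in> {1..r} \<Longrightarrow>
        simple_graph (V i) (E i) \<and> connected_graph (V i) (E i) \<and>
        locally_finite (V i) (E i) \<and> quasi_transitive (V i) (E i) \<and>
        rt i \<in> V i \<and> card (V i) \<noteq> 1 \<and> V i \<noteq> {}"
    and zs_pos: "zs > 0"
    and zs_conv: "\<And>i. i \<in> {1..r} \<Longrightarrow> saw_gf_summable (V i) (E i) (rt i) (complex_of_real zs)"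
    and zs_eq: "(\<Sum>i=1..r. M i (complex_of_real zs) / (1 + M i (complex_of_real zs))) = 1"
    and zs_least: "\<And>x. 0 < x \<Longrightarrow> x < zs \<Longrightarrow>
        (\<Sum>i=1..r. M i (complex_of_real x) / (1 + M i (complex_of_real x))) \<noteq> 1"
  shows "\<exists>S. open S \<and> complex_of_real zs \<in> S \<and> D holomorphic_on S \<and>
           D (complex_of_real zs) = 0 \<and> deriv D (complex_of_real zs) \<noteq> 0 \<and>
           (\<exists>g. g holomorphic_on S \<and> g (complex_of_real zs) \<noteq> 0 \<and>
              (\<forall>z\<in>S - {complex_of_real zs}. N z / D z = g z / (z - complex_of_real zs)))"
proof -
  define c where "c i n = saw_count (V i) (E i) (rt i) n" for i n
  define a where "a i n = (if n = 0 then 0 else of_nat (c i n) :: complex)" for i n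
  define bb where "bb i n = (if n = 0 then 0 else real (c i n))" for i n
  define z0 where "z0 = complex_of_real zs"
  define I where "I = {1..r}"
  have finI: "finite I" and neI: "I \<noteq> {}" unfolding I_def using r2 by auto
  have Mfun: "M i = (\<lambda>z. \<Sum>n. a i n * z ^ n)" for i
    unfolding M_def saw_gf_def a_def c_def by (simp add: fun_eq_iff)
  have ab: "a i n * complex_of_real x ^ n = complex_of_real (bb i n * x ^ n)" for i n x
    unfolding a_def bb_def by simp
  have sz: "summable (\<lambda>n. a i n * z0 ^ n)" if i: "i \<in> I" for i
    using zs_conv[OF i[unfolded I_def]] unfolding saw_gf_summable_def z0_def a_def c_def .
  have rad: "\<exists>\<rho>>zs. summable (\<lambda>n. a i n * complex_of_real \<rho> ^ n)" if i: "i \<in> I" for i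
  proof -
    have g: "simple_graph (V i) (E i)" "connected_graph (V i) (E i)"
        "locally_finite (V i) (E i)" "quasi_transitive (V i) (E i)" "rt i \<in> V i"
      using graphs[of i] i unfolding I_def by auto
    have "summable (\<lambda>n. real (c i n) * zs ^ n)"
      using sz[OF i] coeff_conv[of "c i" zs] unfolding a_def z0_def by simp
    then obtain y where y: "y > zs" "summable (\<lambda>n. real (c i n) * y ^ n)"
      using radius_gain[OF g(1) g(3) g(2) g(4) g(5) zs_pos] unfolding c_def by blast
    then show ?thesis using coeff_conv[of "c i" y] unfolding a_def by auto
  qed
  then obtain \<rho>i where \<rho>i: "\<And>i. i \<in> I \<Longrightarrow> \<rho>i i > zs \<and> summable (\<lambda>n. a i n * complex_of_real (\<rho>i i) ^ n)"
    by metis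
  define \<rho> where "\<rho> = Min (\<rho>i ` I)"
  have \<rho>: "\<rho> > zs" "\<And>i. i \<in> I \<Longrightarrow> \<rho> \<le> \<rho>i i"
    unfolding \<rho>_def using finI neI \<rho>i by auto
  define Md where "Md i z = (\<Sum>n. diffs (a i) n * z ^ n)" for i z
  have dM: "(M i has_field_derivative Md i z) (at z)" if i: "i \<in> I" and z: "norm z < \<rho>" for i z
  proof -
    have "norm z < norm (complex_of_real (\<rho>i i))" using z \<rho>(2)[OF i] \<rho>i[OF i] zs_pos by auto
    then show ?thesis unfolding Mfun Md_def using termdiffs_strong[OF conjunct2[OF \<rho>i[OF i]]] by blast
  qed
  have Mhol: "M i holomorphic_on ball 0 \<rho>" if "i \<in> I" for i
  proof -
    have "\<forall>x\<in>ball 0 \<rho>. \<exists>f'. (M i has_field_derivative f') (at x)"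
      using dM[OF that] by (metis mem_ball_0)
    then show ?thesis by (simp add: holomorphic_on_open)
  qed
  have z0in: "norm z0 < \<rho>" unfolding z0_def using \<rho> zs_pos by simp
  define m where "m i = (\<Sum>n. bb i n * zs ^ n)" for i
  define d where "d i = (\<Sum>n. diffs (bb i) n * zs ^ n)" for i
  have Mz0: "M i z0 = complex_of_real (m i)" and m0: "m i \<ge> 0" if i: "i \<in> I" for i
  proof -
    have "summable (\<lambda>n. complex_of_real (bb i n * zs ^ n))" using sz[OF i] unfolding z0_def ab .
    then have sm: "summable (\<lambda>n. bb i n * zs ^ n)" by (simp only: summable_of_real_iff)
    have "M i z0 = (\<Sum>n. complex_of_real (bb i n * zs ^ n))" unfolding Mfun z0_def ab ..
    also have "\<dots> = complex_of_real (m i)" unfolding m_def by (rule suminf_of_real[OF sm, symmetric])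
    finally show "M i z0 = complex_of_real (m i)" .
    show "m i \<ge> 0" unfolding m_def using sm zs_pos by (intro suminf_nonneg) (auto simp: bb_def)
  qed
  have Mdz0: "Md i z0 = complex_of_real (d i)" and d0: "d i > 0" if i: "i \<in> I" for i
  proof -
    have "summable (\<lambda>n. diffs (a i) n * z0 ^ n)"
    proof (rule termdiff_converges[of z0 "\<rho>"])
      show "norm z0 < \<rho>" by (rule z0in)
      fix x :: complex assume "norm x < \<rho>"
      then have "norm x < norm (complex_of_real (\<rho>i i))" using \<rho>(2)[OF i] \<rho>i[OF i] zs_pos by auto
      then show "summable (\<lambda>n. a i n * x ^ n)" using powser_inside conjunct2[OF \<rho>i[OF i]] by blast
    qed
    moreover have dab: "diffs (a i) n * z0 ^ n = complex_of_real (diffs (bb i) n * zs ^ n)" for n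
      unfolding diffs_def a_def bb_def z0_def by simp
    ultimately have "summable (\<lambda>n. complex_of_real (diffs (bb i) n * zs ^ n))" by simp
    then have sm: "summable (\<lambda>n. diffs (bb i) n * zs ^ n)" by (simp only: summable_of_real_iff)
    have "Md i z0 = (\<Sum>n. complex_of_real (diffs (bb i) n * zs ^ n))" unfolding Md_def dab ..
    also have "\<dots> = complex_of_real (d i)" unfolding d_def by (rule suminf_of_real[OF sm, symmetric])
    finally show "Md i z0 = complex_of_real (d i)" .
    have g: "simple_graph (V i) (E i)" "connected_graph (V i) (E i)"
        "locally_finite (V i) (E i)" "rt i \<in> V i" "card (V i) \<noteq> 1" "V i \<noteq> {}"
      using graphs[of i] i unfolding I_def by auto
    have "c i 1 > 0" unfolding c_def using c1_pos[OF g(1) g(3) g(2) g(4) g(5) g(6)] .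
    then have "0 < diffs (bb i) 0 * zs ^ 0" unfolding diffs_def bb_def by simp
    then show "d i > 0" unfolding d_def
      by (intro suminf_pos2[OF sm, of 0]) (use zs_pos in \<open>auto simp: diffs_def bb_def\<close>)
  qed
  have onepos: "1 + M i z0 \<noteq> 0" if "i \<in> I" for i
  proof -
    have "1 + M i z0 = complex_of_real (1 + m i)" using Mz0[OF that] by simp
    then show ?thesis using m0[OF that] by (metis add_nonneg_eq_0_iff of_real_eq_0_iff zero_le_one one_neq_zero)
  qed
  define H where "H z = 1 - (\<Sum>i\<in>I. M i z / (1 + M i z))" for z
  have DPH: "D z = N z * H z" if nz: "\<forall>i\<in>I. 1 + M i z \<noteq> 0" for z
  proof -
    have "N z * (M i z / (1 + M i z)) = M i z * (\<Prod>j\<in>I-{i}. 1 + M j z)" if i: "i \<in> I" for i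
    proof -
      have "N z = (1 + M i z) * (\<Prod>j\<in>I-{i}. 1 + M j z)"
        unfolding N_def I_def[symmetric] using i finI by (simp add: prod.remove)
      then show ?thesis using nz i by simp
    qed
    then have "N z * (\<Sum>i\<in>I. M i z / (1 + M i z)) = (\<Sum>i\<in>I. M i z * (\<Prod>j\<in>I-{i}. 1 + M j z))"
      by (simp add: sum_distrib_left)
    then show ?thesis unfolding D_def H_def N_def I_def[symmetric] by (simp add: right_diff_distrib)
  qed
  have Hz0: "H z0 = 0" unfolding H_def I_def z0_def using zs_eq by simp
  have Dz0: "D z0 = 0" using DPH[of z0] onepos Hz0 by simp
  have "eventually (\<lambda>z. \<forall>i\<in>I. 1 + M i z \<noteq> 0) (at z0)"
  proof (rule eventually_ball_finite[OF finI], intro ballI)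
    fix i assume i: "i \<in> I"
    have "isCont (M i) z0" using DERIV_isCont[OF dM[OF i z0in]] .
    then have "((\<lambda>z. 1 + M i z) \<longlongrightarrow> 1 + M i z0) (at z0)"
      unfolding isCont_def by (intro tendsto_intros)
    then show "eventually (\<lambda>z. 1 + M i z \<noteq> 0) (at z0)"
      using onepos[OF i] by (rule tendsto_imp_eventually_ne)
  qed
  then obtain \<delta>2 where \<delta>2: "\<delta>2 > 0" "\<And>z. z \<noteq> z0 \<Longrightarrow> dist z z0 < \<delta>2 \<Longrightarrow> \<forall>i\<in>I. 1 + M i z \<noteq> 0"
    unfolding eventually_at by auto
  define \<delta> where "\<delta> = min \<delta>2 (\<rho> - zs)"
  have \<delta>: "\<delta> > 0" unfolding \<delta>_def using \<delta>2 \<rho> by auto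
  define U where "U = ball z0 \<delta>"
  have UT: "U \<subseteq> ball 0 \<rho>"
  proof
    fix z assume "z \<in> U"
    then have "dist z0 z < \<rho> - zs" unfolding U_def \<delta>_def by auto
    moreover have "norm z \<le> norm z0 + dist z0 z" by (metis dist_norm norm_triangle_sub dist_commute)
    moreover have "norm z0 = zs" unfolding z0_def using zs_pos by simp
    ultimately show "z \<in> ball 0 \<rho>" by auto
  qed
  have Unz: "\<forall>i\<in>I. 1 + M i z \<noteq> 0" if "z \<in> U" for z
  proof (cases "z = z0")
    case True then show ?thesis using onepos by auto
  next
    case False then show ?thesis using \<delta>2(2)[of z] that unfolding U_def \<delta>_def by (auto simp: dist_commute)
  qed
  have Nhol: "N holomorphic_on ball 0 \<rho>"
    unfolding N_def I_def[symmetric] by (intro holomorphic_intros Mhol)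
  have Dhol: "D holomorphic_on ball 0 \<rho>"
    unfolding D_def I_def[symmetric] by (intro holomorphic_intros Mhol) auto
  obtain Nd where dN: "(N has_field_derivative Nd) (at z0)"
    using Nhol z0in by (metis holomorphic_on_open mem_ball_0 open_ball)
  define Hd where "Hd = 0 - (\<Sum>i\<in>I. (Md i z0 * (1 + M i z0) - M i z0 * (0 + Md i z0)) / ((1 + M i z0) * (1 + M i z0)))"
  have dH: "(H has_field_derivative Hd) (at z0)"
    unfolding H_def[abs_def] Hd_def
    by (intro DERIV_diff DERIV_const DERIV_sum DERIV_divide DERIV_add dM z0in onepos) auto
  have dD: "(D has_field_derivative N z0 * Hd) (at z0)"
  proof -
    have "((\<lambda>z. N z * H z) has_field_derivative Nd * H z0 + Hd * N z0) (at z0)"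
      by (rule DERIV_mult[OF dN dH])
    then have "((\<lambda>z. N z * H z) has_field_derivative N z0 * Hd) (at z0)" using Hz0 by (simp add: mult.commute)
    then show ?thesis
      by (rule has_field_derivative_transform_within_open[where S=U])
         (use \<delta> Unz DPH in \<open>auto simp: U_def\<close>)
  qed
  have Hd_ne: "Hd \<noteq> 0"
  proof -
    have t: "(Md i z0 * (1 + M i z0) - M i z0 * (0 + Md i z0)) / ((1 + M i z0) * (1 + M i z0))
        = complex_of_real (d i / ((1 + m i) * (1 + m i)))" if i: "i \<in> I" for i
    proof -
      have "Md i z0 * (1 + M i z0) - M i z0 * (0 + Md i z0) = complex_of_real (d i)"
        using Mz0[OF i] Mdz0[OF i] by (simp add: algebra_simps)
      moreover have "(1 + M i z0) * (1 + M i z0) = complex_of_real ((1 + m i) * (1 + m i))"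
        using Mz0[OF i] by simp
      ultimately show ?thesis by simp
    qed
    have "Hd = - complex_of_real (\<Sum>i\<in>I. d i / ((1 + m i) * (1 + m i)))"
      unfolding Hd_def using t by simp
    moreover have "(\<Sum>i\<in>I. d i / ((1 + m i) * (1 + m i))) > 0"
    proof -
      have mp: "1 + m i > 0" if "i \<in> I" for i using m0[OF that] by linarith
      show ?thesis using finI neI d0 mp by (intro sum_pos) (auto intro!: divide_pos_pos mult_pos_pos)
    qed
    ultimately show ?thesis by (metis neg_equal_0_iff_equal of_real_eq_0_iff order_less_irrefl)
  qed
  have Nz0: "N z0 \<noteq> 0"
    unfolding N_def I_def[symmetric] using onepos finI by (simp add: prod_zero_iff)
  define D' where "D' = N z0 * Hd"
  have D'ne: "D' \<noteq> 0" unfolding D'_def using Hd_ne Nz0 by simp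
  have derivD: "deriv D z0 = D'" unfolding D'_def by (rule DERIV_imp_deriv[OF dD])
  have "((\<lambda>z. (D z - D z0) / (z - z0)) \<longlongrightarrow> D') (at z0)"
    using dD unfolding D'_def has_field_derivative_iff .
  then have "eventually (\<lambda>z. (D z - D z0) / (z - z0) \<noteq> 0) (at z0)"
    using D'ne by (rule tendsto_imp_eventually_ne)
  then obtain \<delta>3 where \<delta>3: "\<delta>3 > 0" "\<And>z. z \<noteq> z0 \<Longrightarrow> dist z z0 < \<delta>3 \<Longrightarrow> (D z - D z0) / (z - z0) \<noteq> 0"
    unfolding eventually_at by auto
  define S where "S = ball z0 (min \<delta> \<delta>3)"
  have SU: "S \<subseteq> ball 0 \<rho>" using UT unfolding S_def U_def by auto
  have oS: "open S" and z0S: "z0 \<in> S" unfolding S_def using \<delta> \<delta>3 by auto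
  have DholS: "D holomorphic_on S" using Dhol SU by (rule holomorphic_on_subset)
  have NholS: "N holomorphic_on S" using Nhol SU by (rule holomorphic_on_subset)
  define q where "q = (\<lambda>z. if z = z0 then deriv D z0 else (D z - D z0) / (z - z0))"
  have qhol: "q holomorphic_on S" unfolding q_def using pole_lemma_open[OF DholS oS] .
  have qne: "q z \<noteq> 0" if "z \<in> S" for z
  proof (cases "z = z0")
    case True then show ?thesis unfolding q_def using derivD D'ne by simp
  next
    case False
    then have "dist z z0 < \<delta>3" using that unfolding S_def by (auto simp: dist_commute)
    then show ?thesis unfolding q_def using \<delta>3(2)[OF False] False by simp
  qed
  define g where "g = (\<lambda>z. N z / q z)"
  have ghol: "g holomorphic_on S" unfolding g_def using NholS qhol qne by (intro holomorphic_on_divide)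
  have gz0: "g z0 \<noteq> 0" unfolding g_def q_def using Nz0 derivD D'ne by simp
  have geq: "N z / D z = g z / (z - z0)" if "z \<in> S - {z0}" for z
  proof -
    have zz: "z \<noteq> z0" using that by auto
    have "q z = D z / (z - z0)" unfolding q_def using zz Dz0 by simp
    then have "D z = q z * (z - z0)" using zz by (simp add: field_simps)
    then show ?thesis unfolding g_def by simp
  qed
  show ?thesis
    using oS z0S DholS Dz0 derivD D'ne ghol gz0 geq unfolding z0_def by blast
qed

end
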